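(* Let $m$ be a positive integer and $\sigma$ a composition of $m$. The maps $\Phi_\sigma:\Delta(\mathcal{T},m)\to\Gamma(\mathsf{hypo},\sigma)$, $Q\mapsto\pi_\sigma(Q)$, and $\Gamma(\mathsf{hypo},\sigma)\to\Delta(\mathcal{T},m)$, $T\mapsto\overline{T}$, are mutually inverse isomorphisms of unlabelled directed graphs.
   Context: Entries are positive integers. A quasi-array of size $m$ is an array $Q$ with cells $(i,j)$, $1\le i\le m$, $1\le j\le m-i+1$, each containing a positive integer $Q_{(i,j)}$, with $Q_{(1,j)}\le Q_{(1,j+1)}$ and $Q_{(i,j)}=Q_{(1,i+j-1)}+i-1$. The $k$-th diagonal is the set of cells with $i+j-1=k$. For $Q$ of size $m$: $D_m$ is always defined and adds $1$ to every entry of the $m$-th diagonal; for $1\le k\le m-1$, $D_k$ is defined iff $Q_{(1,k)}<Q_{(1,k+1)}$, and then adds $1$ to all entries of the $k$-th diagonal; $D_k$ is undefined for $k>m$. $\Delta(\mathcal{T},m)$ is the directed graph whose vertices are the quasi-arrays of size $m$, with an edge $Q\to D_k(Q)$ labelled $k$ whenever $D_k$ is defined on $Q$. A quasi-ribbon tableau of shape $\sigma=(\sigma_1,\dots,\sigma_r)$ is a filling with positive integers of the diagram having $\sigma_i$ cells in row $i$, the leftmost cell of row $i+1$ directly below the rightmost cell of row $i$, weakly increasing along rows and strictly increasing down columns. Its column reading is the word read column by column left to right, each column bottom to top. Quasi-Kashiwara operators on words: if $u$ contains a subsequence $(i+1)\,i$, $f_i(u)$ is undefined; otherwise $f_i(u)$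 replaces the rightmost $i$ by $i+1$ (undefined if no $i$ occurs). $\Gamma(\mathsf{hypo},\sigma)$ is the directed graph whose vertices are the quasi-ribbon tableaux of shape $\sigma$ (identified with their column readings), with an edge $u\to f_i(u)$ labelled $i$ whenever $f_i(u)$ is defined ($i\ge1$); it is a connected component of the graph on all words. $\pi_\sigma(Q)$ is the quasi-ribbon tableau formed by the cells of $Q$ making up a quasi-ribbon diagram of shape $\sigma$ whose first cell is $(1,1)$, with their entries from $Q$. For a quasi-ribbon tableau $T$ of shape $\sigma$ with $m$ cells, $\overline{T}$ is the unique quasi-array of size $m$ with $\pi_\sigma(\overline{T})=T$ (obtained by placing $T$ with its top-left cell at $(1,1)$ and filling each diagonal as a sequence of consecutive integers increasing downward). *)

theory Defs
  imports Main
begin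

text \<open>Arrays and tableaux are functions nat \<Rightarrow> nat \<Rightarrow> nat indexed by (row, column),
  both 1-based, with value 0 outside the relevant set of cells.\<close>

definition qcells :: "nat \<Rightarrow> (nat \<times> nat) set" where
  "qcells m = {(i,j). 1 \<le> i \<and> i \<le> m \<and> 1 \<le> j \<and> j \<le> m - i + 1}"

definition quasi_array :: "nat \<Rightarrow> (nat \<Rightarrow> nat \<Rightarrow> nat) \<Rightarrow> bool" where
  "quasi_array m Q \<longleftrightarrow>
     (\<forall>i j. (i,j) \<in> qcells m \<longrightarrow> 0 < Q i j) \<and>
     (\<forall>i j. (i,j) \<notin> qcells m \<longrightarrow> Q i j = 0) \<and>
     (\<forall>j. 1 \<le> j \<and> j < m \<longrightarrow> Q 1 j \<le> Q 1 (j+1)) \<and>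
     (\<forall>i j. (i,j) \<in> qcells m \<longrightarrow> Q i j = Q 1 (i+j-1) + i - 1)"

definition Dop :: "nat \<Rightarrow> nat \<Rightarrow> (nat \<Rightarrow> nat \<Rightarrow> nat) \<Rightarrow> (nat \<Rightarrow> nat \<Rightarrow> nat) option" where
  "Dop m k Q =
     (if (1 \<le> k \<and> k = m) \<or> (1 \<le> k \<and> k < m \<and> Q 1 k < Q 1 (k+1))
      then Some (\<lambda>i j. if (i,j) \<in> qcells m \<and> i + j - 1 = k then Q i j + 1 else Q i j)
      else None)"

definition Delta_edge :: "nat \<Rightarrow> (nat \<Rightarrow> nat \<Rightarrow> nat) \<Rightarrow> (nat \<Rightarrow> nat \<Rightarrow> nat) \<Rightarrow> bool" where
  "Delta_edge m Q Q' \<longleftrightarrow> (\<exists>k. Dop m k Q = Some Q')"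

definition composition :: "nat list \<Rightarrow> nat \<Rightarrow> bool" where
  "composition \<sigma> m \<longleftrightarrow> \<sigma> \<noteq> [] \<and> (\<forall>x\<in>set \<sigma>. 0 < x) \<and> sum_list \<sigma> = m"

text \<open>Column of the leftmost cell of row r (1-based): row r+1 starts directly
  below the rightmost cell of row r.\<close>
definition row_start :: "nat list \<Rightarrow> nat \<Rightarrow> nat" where
  "row_start \<sigma> r = 1 + sum_list (map (\<lambda>x. x - 1) (take (r - 1) \<sigma>))"

definition ribbon_cells :: "nat list \<Rightarrow> (nat \<times> nat) set" where
  "ribbon_cells \<sigma> = {(r,c). 1 \<le> r \<and> r \<le> length \<sigma> \<and> row_start \<sigma> r \<le> c \<and>
                              c < row_start \<sigma> r + \<sigma> ! (r - 1)}"

definition qrt :: "nat list \<Rightarrow> (nat \<Rightarrow> nat \<Rightarrow> nat) \<Rightarrow> bool" where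
  "qrt \<sigma> T \<longleftrightarrow>
     (\<forall>r c. (r,c) \<in> ribbon_cells \<sigma> \<longrightarrow> 0 < T r c) \<and>
     (\<forall>r c. (r,c) \<notin> ribbon_cells \<sigma> \<longrightarrow> T r c = 0) \<and>
     (\<forall>r c. (r,c) \<in> ribbon_cells \<sigma> \<and> (r,c+1) \<in> ribbon_cells \<sigma> \<longrightarrow> T r c \<le> T r (c+1)) \<and>
     (\<forall>r c. (r,c) \<in> ribbon_cells \<sigma> \<and> (r+1,c) \<in> ribbon_cells \<sigma> \<longrightarrow> T r c < T (r+1) c)"

text \<open>Column reading: columns left to right, each column bottom to top.
  All cells lie in columns 1..m where m = sum_list sigma.\<close>
definition col_reading :: "nat list \<Rightarrow> (nat \<Rightarrow> nat \<Rightarrow> nat) \<Rightarrow> nat list" where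
  "col_reading \<sigma> T =
     concat (map (\<lambda>c. map (\<lambda>r. T r c)
                           (rev (filter (\<lambda>r. (r,c) \<in> ribbon_cells \<sigma>) [1..<length \<sigma> + 1])))
                 [1..<sum_list \<sigma> + 1])"

definition qk_f :: "nat \<Rightarrow> nat list \<Rightarrow> nat list option" where
  "qk_f i u =
     (if (\<exists>p q. p < q \<and> q < length u \<and> u ! p = i + 1 \<and> u ! q = i) \<or> i \<notin> set u then None
      else Some (u[(GREATEST p. p < length u \<and> u ! p = i) := i + 1]))"

definition Gamma_edge :: "nat list \<Rightarrow> (nat \<Rightarrow> nat \<Rightarrow> nat) \<Rightarrow> (nat \<Rightarrow> nat \<Rightarrow> nat) \<Rightarrow> bool" where
  "Gamma_edge \<sigma> T T' \<longleftrightarrow>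
     (\<exists>i. 1 \<le> i \<and> qk_f i (col_reading \<sigma> T) = Some (col_reading \<sigma> T'))"

definition pi_sigma :: "nat list \<Rightarrow> (nat \<Rightarrow> nat \<Rightarrow> nat) \<Rightarrow> (nat \<Rightarrow> nat \<Rightarrow> nat)" where
  "pi_sigma \<sigma> Q = (\<lambda>r c. if (r,c) \<in> ribbon_cells \<sigma> then Q r c else 0)"

definition bar :: "nat list \<Rightarrow> (nat \<Rightarrow> nat \<Rightarrow> nat) \<Rightarrow> (nat \<Rightarrow> nat \<Rightarrow> nat)" where
  "bar \<sigma> T = (THE Q. quasi_array (sum_list \<sigma>) Q \<and> pi_sigma \<sigma> Q = T)"

end

theory Submission imports Defs begin

lemma sum_minus1: "(\<forall>x\<in>set xs. 0 < (x::nat)) \<Longrightarrow> sum_list (map (\<lambda>x. x - 1) xs) + length xs = sum_list xs"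
  by (induction xs) auto

locale rib = fixes \<sigma> :: "nat list" and m :: nat
  assumes comp: "composition \<sigma> m"
begin

definition G :: "nat \<Rightarrow> nat" where "G r = sum_list (take r \<sigma>)"

lemma pos: "x \<in> set \<sigma> \<Longrightarrow> 0 < x" using comp unfolding composition_def by auto
lemma ne: "\<sigma> \<noteq> []" using comp unfolding composition_def by auto
lemma G_len: "G (length \<sigma>) = m" using comp unfolding composition_def G_def by auto
lemma G0: "G 0 = 0" by (simp add: G_def)

lemma G_Suc: "r < length \<sigma> \<Longrightarrow> G (Suc r) = G r + \<sigma> ! r"
  by (simp add: G_def take_Suc_conv_app_nth)

lemma G_less: "r < r' \<Longrightarrow> r' \<le> length \<sigma> \<Longrightarrow> G r < G r'"
proof (induction r')
  case 0 then show ?case by simp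
next
  case (Suc r')
  have "0 < \<sigma> ! r'" using Suc.prems pos by auto
  then show ?case using Suc G_Suc[of r'] by (cases "r = r'") auto
qed

lemma G_le: "r \<le> r' \<Longrightarrow> r' \<le> length \<sigma> \<Longrightarrow> G r \<le> G r'"
  using G_less by (cases "r = r'") (auto simp: less_imp_le)

lemma G_ge: "r \<le> length \<sigma> \<Longrightarrow> r \<le> G r"
proof (induction r)
  case 0 then show ?case by simp
next
  case (Suc r)
  have "0 < \<sigma> ! r" using Suc.prems pos by auto
  then show ?case using Suc G_Suc[of r] by auto
qed

lemma G_le_m: "r \<le> length \<sigma> \<Longrightarrow> G r \<le> m"
  using G_le[of r "length \<sigma>"] G_len by auto

lemma ribbon_iff: "(r,c) \<in> ribbon_cells \<sigma> \<longleftrightarrow>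
   1 \<le> r \<and> r \<le> length \<sigma> \<and> 1 \<le> c \<and> G (r-1) < r + c - 1 \<and> r + c - 1 \<le> G r"
proof (cases "1 \<le> r \<and> r \<le> length \<sigma>")
  case True
  define A where "A = take (r-1) \<sigma>"
  have lA: "length A = r - 1" using True by (auto simp: A_def)
  have pA: "\<forall>x\<in>set A. 0 < x" using pos by (auto simp: A_def dest: in_set_takeD)
  have s: "sum_list (map (\<lambda>x. x - 1) A) + (r - 1) = G (r-1)"
    using sum_minus1[OF pA] lA by (simp add: A_def G_def)
  have rs: "row_start \<sigma> r = 1 + sum_list (map (\<lambda>x. x - 1) A)"
    by (simp add: row_start_def A_def)
  have gs: "G r = G (r-1) + \<sigma> ! (r-1)" using G_Suc[of "r-1"] True by (cases r) auto
  have ge: "r - 1 \<le> G (r-1)" using True by (intro G_ge) auto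
  show ?thesis using True s rs gs ge unfolding ribbon_cells_def by (auto; arith)
next
  case False
  then show ?thesis unfolding ribbon_cells_def by auto
qed


lemma rib_K: assumes "(r,c) \<in> ribbon_cells \<sigma>" "(r',c') \<in> ribbon_cells \<sigma>" "r < r'"
  shows "r + c < r' + c'"
proof -
  have a: "r + c - 1 \<le> G r" "1 \<le> c" "G (r'-1) < r' + c' - 1" "r' \<le> length \<sigma>"
    using assms(1,2) ribbon_iff by auto
  have "G r \<le> G (r'-1)" using assms(3) a(4) by (intro G_le) auto
  then show ?thesis using a by linarith
qed

lemma rib_uniq: assumes "(r,c) \<in> ribbon_cells \<sigma>" "(r',c') \<in> ribbon_cells \<sigma>" "r + c = r' + c'"
  shows "r = r' \<and> c = c'"
proof -
  have "r = r'"
  proof (rule ccontr)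
    assume "r \<noteq> r'"
    then consider "r < r'" | "r' < r" by linarith
    then show False using rib_K[OF assms(1,2)] rib_K[OF assms(2,1)] assms(3) by cases auto
  qed
  then show ?thesis using assms(3) by simp
qed

lemma rib_exists: assumes "1 \<le> d" "d \<le> m" shows "\<exists>r c. (r,c) \<in> ribbon_cells \<sigma> \<and> r + c = d + 1"
proof -
  define r where "r = (LEAST r. d \<le> G r)"
  have ex: "d \<le> G (length \<sigma>)" using G_len assms by simp
  have r1: "d \<le> G r" unfolding r_def by (rule LeastI[of "\<lambda>r. d \<le> G r", OF ex])
  have r2: "r \<le> length \<sigma>" unfolding r_def by (rule Least_le[of "\<lambda>r. d \<le> G r", OF ex])
  have r0: "r \<ge> 1" using r1 G0 assms(1) by (cases r) auto
  have r3: "\<not> d \<le> G (r-1)" unfolding r_def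
    by (rule not_less_Least) (use r0 r_def in auto)
  have r4: "r - 1 \<le> G (r-1)" using r2 by (intro G_ge) auto
  define c where "c = d + 1 - r"
  have "(r,c) \<in> ribbon_cells \<sigma>" unfolding ribbon_iff using r0 r1 r2 r3 r4 unfolding c_def by auto
  moreover have "r + c = d + 1" using r3 r4 unfolding c_def by auto
  ultimately show ?thesis by blast
qed

lemma rib_step: assumes "(r,c) \<in> ribbon_cells \<sigma>" "(r',c') \<in> ribbon_cells \<sigma>" "r' + c' = r + c + 1"
  shows "(r' = r \<and> c' = c + 1) \<or> (r' = r + 1 \<and> c' = c)"
proof -
  have "\<not> r' < r" using rib_K[OF assms(2,1)] assms(3) by auto
  moreover have "r < r' \<Longrightarrow> r' = r + 1"
  proof (rule ccontr)
    assume h: "r < r'" "r' \<noteq> r + 1"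
    have a: "r + c - 1 \<le> G r" "1 \<le> c" "G (r'-1) < r' + c' - 1" "r' \<le> length \<sigma>"
      using assms(1,2) ribbon_iff by auto
    have "G r < G (r'-1)" using h a(4) by (intro G_less) auto
    then show False using a assms(3) by linarith
  qed
  ultimately show ?thesis using assms(3) by (cases "r = r'") auto
qed

lemma rib_qcells: "(r,c) \<in> ribbon_cells \<sigma> \<Longrightarrow> (r,c) \<in> qcells m"
  unfolding qcells_def using ribbon_iff[of r c] G_le_m[of r] by auto

lemma rib_bounds: "(r,c) \<in> ribbon_cells \<sigma> \<Longrightarrow> 1 \<le> r \<and> r \<le> length \<sigma> \<and> 1 \<le> c \<and> c \<le> m \<and> r + c - 1 \<le> m"
  using ribbon_iff[of r c] G_le_m[of r] by auto

end

lemma qa_val: "quasi_array m Q \<Longrightarrow> (i,j) \<in> qcells m \<Longrightarrow> Q i j = Q 1 (i+j-1) + i - 1"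
  unfolding quasi_array_def by blast

lemma qa_zero: "quasi_array m Q \<Longrightarrow> (i,j) \<notin> qcells m \<Longrightarrow> Q i j = 0"
  unfolding quasi_array_def by blast

lemma qa_pos: "quasi_array m Q \<Longrightarrow> (i,j) \<in> qcells m \<Longrightarrow> 0 < Q i j"
  unfolding quasi_array_def by blast

lemma qcells_diag: "(i,j) \<in> qcells m \<Longrightarrow> 1 \<le> i+j-1 \<and> i+j-1 \<le> m \<and> 1 \<le> i"
  unfolding qcells_def by auto

lemma qcells_1: "1 \<le> d \<Longrightarrow> d \<le> m \<Longrightarrow> (1,d) \<in> qcells m"
  unfolding qcells_def by auto

lemma qa_mono: assumes "quasi_array m Q" "1 \<le> a" "a \<le> b" "b \<le> m" shows "Q 1 a \<le> Q 1 b"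
  using assms(3,4)
proof (induction b)
  case 0 then show ?case by simp
next
  case (Suc b)
  show ?case
  proof (cases "a = Suc b")
    case False
    then have "a \<le> b" using Suc by simp
    moreover have "Q 1 b \<le> Q 1 (b+1)" using assms(1) assms(2) Suc.prems \<open>a \<le> b\<close>
      unfolding quasi_array_def by auto
    ultimately show ?thesis using Suc by simp
  qed simp
qed

context rib begin

lemma ribQ: "quasi_array m Q \<Longrightarrow> (r,c) \<in> ribbon_cells \<sigma> \<Longrightarrow> Q r c = Q 1 (r+c-1) + r - 1"
  using qa_val rib_qcells by blast

lemma uniqQ: assumes "quasi_array m Q1" "quasi_array m Q2" "pi_sigma \<sigma> Q1 = pi_sigma \<sigma> Q2"
  shows "Q1 = Q2"
proof -
  have row: "Q1 1 d = Q2 1 d" if hd: "1 \<le> d" "d \<le> m" for d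
  proof -
    obtain r c where rc: "(r,c) \<in> ribbon_cells \<sigma>" "r + c = d + 1" using rib_exists[OF hd] by blast
    have "Q1 r c = Q2 r c" using assms(3) rc(1) unfolding pi_sigma_def by meson
    then show ?thesis using ribQ[OF assms(1) rc(1)] ribQ[OF assms(2) rc(1)] rc(2) rib_bounds[OF rc(1)] by (simp; arith)
  qed
  show ?thesis
  proof (intro ext)
    fix i j
    show "Q1 i j = Q2 i j"
    proof (cases "(i,j) \<in> qcells m")
      case True
      then show ?thesis using qa_val[OF assms(1) True] qa_val[OF assms(2) True] row qcells_diag[OF True] by simp
    next
      case False
      then show ?thesis using qa_zero assms by metis
    qed
  qed
qed

lemma part1: assumes "quasi_array m Q" shows "qrt \<sigma> (pi_sigma \<sigma> Q)"
  unfolding qrt_def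
proof (intro conjI allI impI)
  fix r c assume "(r,c) \<in> ribbon_cells \<sigma>"
  then show "0 < pi_sigma \<sigma> Q r c" using qa_pos[OF assms] rib_qcells unfolding pi_sigma_def by auto
next
  fix r c assume "(r,c) \<notin> ribbon_cells \<sigma>"
  then show "pi_sigma \<sigma> Q r c = 0" unfolding pi_sigma_def by auto
next
  fix r c assume h: "(r,c) \<in> ribbon_cells \<sigma> \<and> (r,c+1) \<in> ribbon_cells \<sigma>"
  have "Q 1 (r+c-1) \<le> Q 1 (r+(c+1)-1)"
    using rib_bounds[of r c] rib_bounds[of r "c+1"] h by (intro qa_mono[OF assms]) auto
  then show "pi_sigma \<sigma> Q r c \<le> pi_sigma \<sigma> Q r (c+1)"
    using h ribQ[OF assms, of r c] ribQ[OF assms, of r "c+1"] unfolding pi_sigma_def by auto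
next
  fix r c assume h: "(r,c) \<in> ribbon_cells \<sigma> \<and> (r+1,c) \<in> ribbon_cells \<sigma>"
  have "Q 1 (r+c-1) \<le> Q 1 ((r+1)+c-1)"
    using rib_bounds[of r c] rib_bounds[of "r+1" c] h by (intro qa_mono[OF assms]) auto
  then show "pi_sigma \<sigma> Q r c < pi_sigma \<sigma> Q (r+1) c"
    using h ribQ[OF assms, of r c] ribQ[OF assms, of "r+1" c] rib_bounds[of r c] unfolding pi_sigma_def by auto
qed

end
context rib begin

lemma qrt_ge_aux: assumes "qrt \<sigma> T"
  shows "\<forall>r c. (r,c) \<in> ribbon_cells \<sigma> \<and> r + c = n + 2 \<longrightarrow> r \<le> T r c"
proof (induction n)
  case 0
  show ?case
  proof (intro allI impI)
    fix r c assume h: "(r,c) \<in> ribbon_cells \<sigma> \<and> r + c = 0 + 2"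
    then have "r = 1" using rib_bounds[of r c] by auto
    moreover have "0 < T r c" using h assms unfolding qrt_def by blast
    ultimately show "r \<le> T r c" by simp
  qed
next
  case (Suc n)
  show ?case
  proof (intro allI impI)
    fix r' c' assume h: "(r',c') \<in> ribbon_cells \<sigma> \<and> r' + c' = Suc n + 2"
    have "n + 1 \<le> m" using rib_bounds[of r' c'] h by auto
    then obtain r c where rc: "(r,c) \<in> ribbon_cells \<sigma>" "r + c = n + 2"
      using rib_exists[of "n+1"] by auto
    have ih: "r \<le> T r c" using Suc rc by blast
    from rib_step[OF rc(1), of r' c'] h rc(2)
    have "(r' = r \<and> c' = c + 1) \<or> (r' = r + 1 \<and> c' = c)" by auto
    then show "r' \<le> T r' c'"
    proof
      assume e: "r' = r \<and> c' = c + 1"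
      then have "T r c \<le> T r (c+1)" using assms rc h unfolding qrt_def by blast
      then show ?thesis using e ih by simp
    next
      assume e: "r' = r + 1 \<and> c' = c"
      then have "T r c < T (r+1) c" using assms rc h unfolding qrt_def by blast
      then show ?thesis using e ih by simp
    qed
  qed
qed

lemma qrt_ge: assumes "qrt \<sigma> T" "(r,c) \<in> ribbon_cells \<sigma>" shows "r \<le> T r c"
proof -
  have "r + c = (r + c - 2) + 2" using rib_bounds[OF assms(2)] by auto
  then show ?thesis using qrt_ge_aux[OF assms(1), of "r+c-2"] assms(2) by metis
qed

lemma qrt_step: assumes "qrt \<sigma> T" "(r,c) \<in> ribbon_cells \<sigma>" "(r',c') \<in> ribbon_cells \<sigma>" "r' + c' = r + c + 1"
  shows "T r c + r' \<le> T r' c' + r"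
proof -
  from rib_step[OF assms(2,3,4)]
  show ?thesis
  proof
    assume e: "r' = r \<and> c' = c + 1"
    then have "T r c \<le> T r (c+1)" using assms unfolding qrt_def by blast
    then show ?thesis using e by simp
  next
    assume e: "r' = r + 1 \<and> c' = c"
    then have "T r c < T (r+1) c" using assms unfolding qrt_def by blast
    then show ?thesis using e by simp
  qed
qed

lemma qrt_exists: assumes T: "qrt \<sigma> T" shows "\<exists>Q. quasi_array m Q \<and> pi_sigma \<sigma> Q = T"
proof -
  define R where "R d = (SOME r. \<exists>c. (r,c) \<in> ribbon_cells \<sigma> \<and> r + c = d + 1)" for d
  have cell: "(R d, d + 1 - R d) \<in> ribbon_cells \<sigma> \<and> R d + (d + 1 - R d) = d + 1"
    if "1 \<le> d" "d \<le> m" for d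
  proof -
    have "\<exists>c. (R d, c) \<in> ribbon_cells \<sigma> \<and> R d + c = d + 1"
      unfolding R_def by (rule someI_ex) (use rib_exists[OF that] in blast)
    then obtain c where h: "(R d, c) \<in> ribbon_cells \<sigma>" "R d + c = d + 1" by blast
    moreover have "c = d + 1 - R d" using h(2) by simp
    ultimately show ?thesis by simp
  qed
  have cellR: "R (r + c - 1) = r" if "(r,c) \<in> ribbon_cells \<sigma>" for r c
  proof -
    have b: "1 \<le> r + c - 1" "r + c - 1 \<le> m" using rib_bounds[OF that] by auto
    from cell[OF b] have "(R (r+c-1), r + c - 1 + 1 - R (r+c-1)) \<in> ribbon_cells \<sigma>"
      "R (r+c-1) + (r + c - 1 + 1 - R (r+c-1)) = r + c - 1 + 1" by auto
    then show ?thesis using rib_uniq[OF that] b by fastforce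
  qed
  define q1 where "q1 d = T (R d) (d + 1 - R d) + 1 - R d" for d
  define Q where "Q i j = (if (i,j) \<in> qcells m then q1 (i+j-1) + i - 1 else 0)" for i j
  have q1pos: "0 < q1 d" if "1 \<le> d" "d \<le> m" for d
    using qrt_ge[OF T] cell[OF that] unfolding q1_def by fastforce
  have q1mono: "q1 d \<le> q1 (d+1)" if "1 \<le> d" "d < m" for d
  proof -
    have c1: "(R d, d + 1 - R d) \<in> ribbon_cells \<sigma>" "R d + (d + 1 - R d) = d + 1" using cell that by auto
    have c2: "(R (d+1), d + 1 + 1 - R (d+1)) \<in> ribbon_cells \<sigma>" "R (d+1) + (d + 1 + 1 - R (d+1)) = d + 1 + 1"
      using cell[of "d+1"] that by auto
    have "T (R d) (d + 1 - R d) + R (d+1) \<le> T (R (d+1)) (d + 1 + 1 - R (d+1)) + R d"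
      using qrt_step[OF T c1(1) c2(1)] c1(2) c2(2) by auto
    moreover have "R d \<le> T (R d) (d + 1 - R d)" using qrt_ge[OF T c1(1)] .
    moreover have "R (d+1) \<le> T (R (d+1)) (d + 1 + 1 - R (d+1))" using qrt_ge[OF T c2(1)] .
    ultimately show ?thesis unfolding q1_def by simp
  qed
  have Q1: "Q 1 d = q1 d" if "1 \<le> d" "d \<le> m" for d
    using qcells_1[OF that] unfolding Q_def by simp
  have qa: "quasi_array m Q"
    unfolding quasi_array_def
  proof (intro conjI allI impI)
    fix i j assume "(i,j) \<in> qcells m"
    then show "0 < Q i j" using q1pos[of "i+j-1"] qcells_diag[of i j m] unfolding Q_def by auto
  next
    fix i j assume "(i,j) \<notin> qcells m"
    then show "Q i j = 0" unfolding Q_def by auto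
  next
    fix j assume "1 \<le> j \<and> j < m"
    then show "Q 1 j \<le> Q 1 (j+1)" using Q1 q1mono by auto
  next
    fix i j assume h: "(i,j) \<in> qcells m"
    have "Q 1 (i+j-1) = q1 (i+j-1)" using Q1 qcells_diag[OF h] by auto
    then show "Q i j = Q 1 (i+j-1) + i - 1" using h unfolding Q_def[of i j] by auto
  qed
  have "pi_sigma \<sigma> Q = T"
  proof (intro ext)
    fix r c
    show "pi_sigma \<sigma> Q r c = T r c"
    proof (cases "(r,c) \<in> ribbon_cells \<sigma>")
      case True
      have b: "1 \<le> r" "r + c - 1 + 1 - r = c" using rib_bounds[OF True] by auto
      have "Q r c = q1 (r+c-1) + r - 1" using rib_qcells[OF True] unfolding Q_def by simp
      also have "\<dots> = T r c" unfolding q1_def cellR[OF True] b(2) using qrt_ge[OF T True] b(1) by simp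
      finally show ?thesis using True unfolding pi_sigma_def by simp
    next
      case False
      then show ?thesis using T unfolding pi_sigma_def qrt_def by auto
    qed
  qed
  then show ?thesis using qa by blast
qed

lemma bar_props: assumes "qrt \<sigma> T" shows "quasi_array m (bar \<sigma> T) \<and> pi_sigma \<sigma> (bar \<sigma> T) = T"
proof -
  have "\<exists>!Q. quasi_array m Q \<and> pi_sigma \<sigma> Q = T"
    using qrt_exists[OF assms] uniqQ by blast
  then show ?thesis unfolding bar_def using G_len[symmetric] comp unfolding composition_def
    by (metis (mono_tags, lifting) theI')
qed

lemma bar_pi: assumes "quasi_array m Q" shows "bar \<sigma> (pi_sigma \<sigma> Q) = Q"
proof -
  have "\<exists>!Q'. quasi_array m Q' \<and> pi_sigma \<sigma> Q' = pi_sigma \<sigma> Q"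
    using assms uniqQ by blast
  moreover have "sum_list \<sigma> = m" using comp unfolding composition_def by simp
  ultimately show ?thesis unfolding bar_def using assms by (metis (mono_tags, lifting) the1_equality)
qed

end
definition Rd :: "nat \<times> nat \<Rightarrow> nat \<times> nat \<Rightarrow> bool" where
  "Rd x y \<longleftrightarrow> snd x < snd y \<or> (snd x = snd y \<and> fst y < fst x)"

definition colf :: "nat list \<Rightarrow> nat \<Rightarrow> (nat \<times> nat) list" where
  "colf \<sigma> c = map (\<lambda>r. (r,c)) (rev (filter (\<lambda>r. (r,c) \<in> ribbon_cells \<sigma>) [1..<length \<sigma> + 1]))"

lemma sorted_colf: "sorted_wrt Rd (concat (map (colf \<sigma>) [1..<n]))"
proof (induction n)
  case 0 then show ?case by simp
next
  case (Suc n)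
  have s1: "sorted_wrt Rd (colf \<sigma> n)"
  proof -
    have "sorted_wrt (<) (filter (\<lambda>r. (r,n) \<in> ribbon_cells \<sigma>) [1..<length \<sigma> + 1])"
      by (rule sorted_wrt_filter) (rule sorted_wrt_upt)
    then show ?thesis unfolding colf_def sorted_wrt_map sorted_wrt_rev Rd_def by simp
  qed
  show ?case
  proof (cases "n = 0")
    case True then show ?thesis by simp
  next
    case False
    then have e: "concat (map (colf \<sigma>) [1..<Suc n]) = concat (map (colf \<sigma>) [1..<n]) @ colf \<sigma> n" by simp
    have a: "\<forall>x \<in> set (concat (map (colf \<sigma>) [1..<n])). snd x < n"
      by (auto simp: colf_def simp del: upt_Suc)
    have b: "\<forall>y\<in>set (colf \<sigma> n). snd y = n" by (auto simp: colf_def simp del: upt_Suc)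
    have c: "\<forall>x \<in> set (concat (map (colf \<sigma>) [1..<n])). \<forall>y\<in>set (colf \<sigma> n). Rd x y"
      using a b by (auto simp: Rd_def)
    show ?thesis unfolding e sorted_wrt_append using Suc.IH s1 c by blast
  qed
qed

lemma set_colf: "set (concat (map (colf \<sigma>) [1..<n])) = {(r,c). (r,c) \<in> ribbon_cells \<sigma> \<and> r < length \<sigma> + 1 \<and> 1 \<le> r \<and> 1 \<le> c \<and> c < n}"
  by (auto simp: colf_def simp del: upt_Suc)

lemma col_reading_map: "col_reading \<sigma> T = map (\<lambda>x. T (fst x) (snd x)) (concat (map (colf \<sigma>) [1..<sum_list \<sigma> + 1]))"
  unfolding col_reading_def colf_def by (simp add: map_concat comp_def rev_map filter_map)

lemma sorted_wrt_idx: assumes "sorted_wrt Rd xs" "i < length xs" "j < length xs"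
  shows "i < j \<longleftrightarrow> Rd (xs!i) (xs!j)"
proof
  assume "i < j" then show "Rd (xs!i) (xs!j)" using assms sorted_wrt_nth_less by blast
next
  assume h: "Rd (xs!i) (xs!j)"
  show "i < j"
  proof (rule ccontr)
    assume "\<not> i < j"
    then consider "i = j" | "j < i" by linarith
    then show False
    proof cases
      case 1 then show False using h by (auto simp: Rd_def)
    next
      case 2 then have "Rd (xs!j) (xs!i)" using assms sorted_wrt_nth_less by blast
      then show False using h by (auto simp: Rd_def)
    qed
  qed
qed

lemma sorted_Rd_distinct: "sorted_wrt Rd xs \<Longrightarrow> distinct xs"
proof (induction xs)
  case Nil then show ?case by simp
next
  case (Cons a xs) then show ?case by (auto simp: Rd_def)
qed

context rib begin

definition P where "P = concat (map (colf \<sigma>) [1..<m + 1])"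

lemma reading: "col_reading \<sigma> T = map (\<lambda>x. T (fst x) (snd x)) P"
  unfolding P_def col_reading_map using comp unfolding composition_def by simp

lemma setP: "set P = ribbon_cells \<sigma>"
  unfolding P_def set_colf using rib_bounds by fastforce

lemma sortedP: "sorted_wrt Rd P" unfolding P_def by (rule sorted_colf)

lemma distinctP: "distinct P" using sortedP by (rule sorted_Rd_distinct)

end
context rib begin

lemma reading_nth: assumes "quasi_array m Q" "q < length P"
  shows "col_reading \<sigma> (pi_sigma \<sigma> Q) ! q = Q (fst (P!q)) (snd (P!q))"
    "length (col_reading \<sigma> (pi_sigma \<sigma> Q)) = length P"
proof -
  have "P!q \<in> ribbon_cells \<sigma>" using setP assms(2) nth_mem by blast
  then show "col_reading \<sigma> (pi_sigma \<sigma> Q) ! q = Q (fst (P!q)) (snd (P!q))"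
    unfolding reading using assms(2) by (simp add: pi_sigma_def)
  show "length (col_reading \<sigma> (pi_sigma \<sigma> Q)) = length P" unfolding reading by simp
qed

lemma edge_fwd: assumes Q: "quasi_array m Q" and Q': "quasi_array m Q'" and D: "Dop m k Q = Some Q'"
  shows "Gamma_edge \<sigma> (pi_sigma \<sigma> Q) (pi_sigma \<sigma> Q')"
proof -
  have kc: "1 \<le> k" "k = m \<or> (k < m \<and> Q 1 k < Q 1 (k+1))"
    and Q'def: "Q' = (\<lambda>i j. if (i,j) \<in> qcells m \<and> i + j - 1 = k then Q i j + 1 else Q i j)"
    using D unfolding Dop_def by (auto split: if_splits)
  have km: "k \<le> m" using kc by auto
  obtain r0 c0 where x0: "(r0,c0) \<in> ribbon_cells \<sigma>" "r0 + c0 = k + 1" using rib_exists[OF kc(1) km] by blast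
  obtain p where p: "p < length P" "P!p = (r0,c0)" using x0(1) setP by (metis in_set_conv_nth)
  define v where "v = Q r0 c0"
  define u where "u = col_reading \<sigma> (pi_sigma \<sigma> Q)"
  have b0: "1 \<le> r0" "1 \<le> c0" using rib_bounds[OF x0(1)] by auto
  have v: "v = Q 1 k + r0 - 1" unfolding v_def using ribQ[OF Q x0(1)] x0(2) by simp
  have vpos: "1 \<le> v" using qa_pos[OF Q rib_qcells[OF x0(1)]] unfolding v_def by simp
  have F1: "r = r0 \<and> c < c0" if h: "(r,c) \<in> ribbon_cells \<sigma>" "Q r c = v" "(r,c) \<noteq> (r0,c0)" for r c
  proof -
    have b: "1 \<le> r" "1 \<le> c" "r + c - 1 \<le> m" using rib_bounds[OF h(1)] by auto
    have Qrc: "Q r c = Q 1 (r+c-1) + r - 1" using ribQ[OF Q h(1)] .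
    consider "r + c = r0 + c0" | "r + c > r0 + c0" | "r + c < r0 + c0" by linarith
    then show ?thesis
    proof cases
      case 1 then show ?thesis using rib_uniq[OF h(1) x0(1)] h(3) by auto
    next
      case 2
      have "r0 \<le> r" using rib_K[OF h(1) x0(1)] 2 by (cases "r < r0") auto
      have km': "k < m" using 2 b x0(2) by auto
      then have "Q 1 k < Q 1 (k+1)" using kc(2) by auto
      also have "Q 1 (k+1) \<le> Q 1 (r+c-1)" using 2 b x0(2) by (intro qa_mono[OF Q]) auto
      finally have "Q 1 k < Q 1 (r+c-1)" .
      then have "v < Q r c" using Qrc v \<open>r0 \<le> r\<close> b0 b by linarith
      then show ?thesis using h(2) by simp
    next
      case 3
      have "r \<le> r0" using rib_K[OF x0(1) h(1)] 3 by (cases "r0 < r") auto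
      have "Q 1 (r+c-1) \<le> Q 1 k" using 3 b x0(2) km by (intro qa_mono[OF Q]) auto
      then have "r = r0" using Qrc v h(2) \<open>r \<le> r0\<close> b0 b by linarith
      then show ?thesis using 3 by simp
    qed
  qed
  have F2: "c0 < c" if h: "(r,c) \<in> ribbon_cells \<sigma>" "Q r c = v + 1" for r c
  proof -
    have b: "1 \<le> r" "1 \<le> c" "r + c - 1 \<le> m" using rib_bounds[OF h(1)] by auto
    have Qrc: "Q r c = Q 1 (r+c-1) + r - 1" using ribQ[OF Q h(1)] .
    show ?thesis
    proof (cases "r + c \<le> r0 + c0")
      case True
      have "r \<le> r0" using rib_K[OF x0(1) h(1)] True by (cases "r0 < r") auto
      have "Q 1 (r+c-1) \<le> Q 1 k" using True b x0(2) km by (intro qa_mono[OF Q]) auto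
      then show ?thesis using Qrc v h(2) \<open>r \<le> r0\<close> b0 b by linarith
    next
      case False
      have "r0 \<le> r" using rib_K[OF h(1) x0(1)] False by (cases "r < r0") auto
      have km': "k < m" using False b x0(2) by auto
      then have "Q 1 k < Q 1 (k+1)" using kc(2) by auto
      also have "Q 1 (k+1) \<le> Q 1 (r+c-1)" using False b x0(2) by (intro qa_mono[OF Q]) auto
      finally have lt: "Q 1 k < Q 1 (r+c-1)" .
      show ?thesis
      proof (cases "r = r0")
        case True then show ?thesis using False by simp
      next
        case False
        then have "v + 1 < Q r c" using lt Qrc v \<open>r0 \<le> r\<close> b0 b by linarith
        then show ?thesis using h(2) by simp
      qed
    qed
  qed
  have un: "u ! q = Q (fst (P!q)) (snd (P!q))" "length u = length P" if "q < length P" for q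
    using reading_nth[OF Q that] unfolding u_def by auto
  have lu: "length u = length P" unfolding u_def reading by simp
  have up: "u ! p = v" using un(1)[OF p(1)] p(2) v_def by simp
  have Pq_rib: "P!q \<in> ribbon_cells \<sigma>" if "q < length P" for q using setP that nth_mem by blast
  have Pq_ne: "P!q \<noteq> (r0,c0)" if "q < length P" "q \<noteq> p" for q
    using distinctP that p nth_eq_iff_index_eq by metis
  have u': "col_reading \<sigma> (pi_sigma \<sigma> Q') = u[p := v + 1]"
  proof (rule nth_equalityI)
    show "length (col_reading \<sigma> (pi_sigma \<sigma> Q')) = length (u[p := v + 1])"
      using lu unfolding reading by simp
  next
    fix q assume "q < length (col_reading \<sigma> (pi_sigma \<sigma> Q'))"
    then have q: "q < length P" unfolding reading by simp
    obtain r c where rc: "P!q = (r,c)" by fastforce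
    have rib: "(r,c) \<in> ribbon_cells \<sigma>" using Pq_rib[OF q] rc by simp
    have "col_reading \<sigma> (pi_sigma \<sigma> Q') ! q = Q' r c" using reading_nth[OF Q' q] rc by simp
    moreover have "Q' r c = (if q = p then Q r c + 1 else Q r c)"
    proof (cases "q = p")
      case True then show ?thesis using rc p x0 rib_qcells[OF rib] unfolding Q'def by auto
    next
      case False
      then have "(r,c) \<noteq> (r0,c0)" using Pq_ne[OF q] rc by simp
      then have "r + c - 1 \<noteq> k" using rib_uniq[OF rib x0(1)] x0(2) rib_bounds[OF rib] by auto
      then show ?thesis using False unfolding Q'def by auto
    qed
    ultimately show "col_reading \<sigma> (pi_sigma \<sigma> Q') ! q = u[p := v + 1] ! q"
      using un[OF q] rc p lu q up v_def by auto
  qed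
  have gr: "(GREATEST q. q < length u \<and> u ! q = v) = p"
  proof (rule Greatest_equality)
    show "p < length u \<and> u ! p = v" using p lu up by simp
  next
    fix q assume h: "q < length u \<and> u ! q = v"
    then have q: "q < length P" using lu by simp
    show "q \<le> p"
    proof (cases "q = p")
      case False
      obtain r c where rc: "P!q = (r,c)" by fastforce
      have "r = r0 \<and> c < c0" using F1[of r c] Pq_rib[OF q] Pq_ne[OF q False] h un[OF q] rc by auto
      then have "Rd (P!q) (P!p)" using rc p by (simp add: Rd_def)
      then show ?thesis using sorted_wrt_idx[OF sortedP q p(1)] by simp
    qed simp
  qed
  have nopat: "\<not> (\<exists>a b. a < b \<and> b < length u \<and> u ! a = v + 1 \<and> u ! b = v)"
  proof
    assume "\<exists>a b. a < b \<and> b < length u \<and> u ! a = v + 1 \<and> u ! b = v"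
    then obtain a b where ab: "a < b" "b < length u" "u ! a = v + 1" "u ! b = v" by blast
    have "b \<le> p" using Greatest_le_nat[of "\<lambda>q. q < length u \<and> u ! q = v" b "length u"] ab gr by auto
    then have ap: "a < p" using ab by simp
    have a: "a < length P" using ap p by simp
    obtain r c where rc: "P!a = (r,c)" by fastforce
    have "c0 < c" using F2[of r c] Pq_rib[OF a] rc un[OF a] ab by auto
    moreover have "Rd (P!a) (P!p)" using sorted_wrt_idx[OF sortedP a p(1)] ap by simp
    ultimately show False using rc p by (simp add: Rd_def)
  qed
  have vin: "v \<in> set u" using up p lu by (metis nth_mem)
  have "qk_f v u = Some (u[p := v + 1])" unfolding qk_f_def using nopat vin gr by simp
  then show ?thesis unfolding Gamma_edge_def u' u_def using vpos by blast
qed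

end
lemma qk_f_some: assumes "qk_f i u = Some w"
  shows "i \<in> set u \<and> w = u[(GREATEST p. p < length u \<and> u ! p = i) := i + 1]"
proof (cases "(\<exists>p q. p < q \<and> q < length u \<and> u ! p = i + 1 \<and> u ! q = i) \<or> i \<notin> set u")
  case True
  have "qk_f i u = None" unfolding qk_f_def using True by (rule if_P)
  then show ?thesis using assms by simp
next
  case False
  have "qk_f i u = Some (u[(GREATEST p. p < length u \<and> u ! p = i) := i + 1])"
    unfolding qk_f_def using False by (rule if_not_P)
  then show ?thesis using assms False by simp
qed

context rib begin

lemma edge_bwd: assumes Q: "quasi_array m Q" and Q': "quasi_array m Q'"
  and G: "Gamma_edge \<sigma> (pi_sigma \<sigma> Q) (pi_sigma \<sigma> Q')"
  shows "Delta_edge m Q Q'"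
proof -
  define u where "u = col_reading \<sigma> (pi_sigma \<sigma> Q)"
  obtain i where i: "1 \<le> i" "qk_f i u = Some (col_reading \<sigma> (pi_sigma \<sigma> Q'))"
    using G unfolding Gamma_edge_def u_def by blast
  define g where "g = (GREATEST p. p < length u \<and> u ! p = i)"
  have iin: "i \<in> set u" and u': "col_reading \<sigma> (pi_sigma \<sigma> Q') = u[g := i + 1]"
    using qk_f_some[OF i(2)] unfolding g_def by auto
  have lu: "length u = length P" unfolding u_def reading by simp
  have g: "g < length u \<and> u ! g = i"
  proof -
    obtain g0 where g0: "g0 < length u \<and> u ! g0 = i" using iin by (metis in_set_conv_nth)
    have "(\<lambda>p. p < length u \<and> u ! p = i) (Greatest (\<lambda>p. p < length u \<and> u ! p = i))"
    proof (rule GreatestI_ex_nat[where b = "length u"])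
      show "\<exists>k. k < length u \<and> u ! k = i" using g0 by blast
    next
      fix y assume "y < length u \<and> u ! y = i" then show "y \<le> length u" by simp
    qed
    then show ?thesis unfolding g_def by simp
  qed
  obtain r0 c0 where rc0: "P!g = (r0,c0)" by fastforce
  have "P!g \<in> set P" using g lu by simp
  then have x0: "(r0,c0) \<in> ribbon_cells \<sigma>" using setP rc0 by simp
  define k where "k = r0 + c0 - 1"
  have b0: "1 \<le> r0" "1 \<le> c0" "1 \<le> k" "k \<le> m" using rib_bounds[OF x0] unfolding k_def by auto
  have vals: "Q' (fst (P!q)) (snd (P!q)) = (if q = g then Q (fst (P!q)) (snd (P!q)) + 1 else Q (fst (P!q)) (snd (P!q)))"
    if q: "q < length P" for q
  proof -
    have "Q' (fst (P!q)) (snd (P!q)) = u[g := i + 1] ! q" using reading_nth[OF Q' q] u' by simp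
    also have "\<dots> = (if q = g then i + 1 else u ! q)" using q lu by simp
    finally show ?thesis using reading_nth[OF Q q] g u_def by auto
  qed
  have B1: "Q' r c = Q r c" if h: "(r,c) \<in> ribbon_cells \<sigma>" "(r,c) \<noteq> (r0,c0)" for r c
  proof -
    obtain q where q: "q < length P" "P!q = (r,c)" using h(1) setP by (metis in_set_conv_nth)
    then have "q \<noteq> g" using h(2) rc0 by auto
    then show ?thesis using vals[OF q(1)] q(2) by simp
  qed
  have B2: "Q' r0 c0 = Q r0 c0 + 1" using vals[of g] g lu rc0 by simp
  have row: "Q' 1 d = (if d = k then Q 1 d + 1 else Q 1 d)" if d: "1 \<le> d" "d \<le> m" for d
  proof -
    obtain r c where rc: "(r,c) \<in> ribbon_cells \<sigma>" "r + c = d + 1" using rib_exists[OF d] by blast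
    have b: "1 \<le> r" using rib_bounds[OF rc(1)] by simp
    have e1: "Q r c = Q 1 d + r - 1" using ribQ[OF Q rc(1)] rc(2) by simp
    have e2: "Q' r c = Q' 1 d + r - 1" using ribQ[OF Q' rc(1)] rc(2) by simp
    show ?thesis
    proof (cases "d = k")
      case True
      then have "(r,c) = (r0,c0)" using rib_uniq[OF rc(1) x0] rc(2) b0 unfolding k_def by auto
      then show ?thesis using B2 e1 e2 b True by auto
    next
      case False
      then have "(r,c) \<noteq> (r0,c0)" using rc(2) b0 unfolding k_def by auto
      then show ?thesis using B1[OF rc(1)] e1 e2 b False by auto
    qed
  qed
  have cond: "(1 \<le> k \<and> k = m) \<or> (1 \<le> k \<and> k < m \<and> Q 1 k < Q 1 (k+1))"
  proof (cases "k = m")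
    case False
    then have km: "k < m" using b0 by simp
    have "Q' 1 k \<le> Q' 1 (k+1)" using Q km b0 Q' unfolding quasi_array_def by auto
    then show ?thesis using row[of k] row[of "k+1"] km b0 by auto
  qed (use b0 in auto)
  have "(\<lambda>a b. if (a,b) \<in> qcells m \<and> a + b - 1 = k then Q a b + 1 else Q a b) = Q'"
  proof (intro ext)
    fix a b
    show "(if (a,b) \<in> qcells m \<and> a + b - 1 = k then Q a b + 1 else Q a b) = Q' a b"
    proof (cases "(a,b) \<in> qcells m")
      case True
      have dd: "1 \<le> a + b - 1" "a + b - 1 \<le> m" "1 \<le> a" using qcells_diag[OF True] by auto
      show ?thesis using qa_val[OF Q True] qa_val[OF Q' True] row[OF dd(1,2)] dd(3) True by auto
    next
      case False
      then show ?thesis using qa_zero[OF Q] qa_zero[OF Q'] by auto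
    qed
  qed
  then have "Dop m k Q = Some Q'" unfolding Dop_def using cond by simp
  then show ?thesis unfolding Delta_edge_def by blast
qed

end

theorem theorem4p1:
  fixes m :: nat and \<sigma> :: "nat list"
  assumes "0 < m" and "composition \<sigma> m"
  shows "(\<forall>Q. quasi_array m Q \<longrightarrow> qrt \<sigma> (pi_sigma \<sigma> Q)) \<and>
         (\<forall>T. qrt \<sigma> T \<longrightarrow> quasi_array m (bar \<sigma> T)) \<and>
         (\<forall>Q. quasi_array m Q \<longrightarrow> bar \<sigma> (pi_sigma \<sigma> Q) = Q) \<and>
         (\<forall>T. qrt \<sigma> T \<longrightarrow> pi_sigma \<sigma> (bar \<sigma> T) = T) \<and>
         (\<forall>Q Q'. quasi_array m Q \<and> quasi_array m Q' \<longrightarrow>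
             (Delta_edge m Q Q' \<longleftrightarrow> Gamma_edge \<sigma> (pi_sigma \<sigma> Q) (pi_sigma \<sigma> Q')))"
proof -
  interpret rib \<sigma> m by unfold_locales (rule assms(2))
  have e: "Delta_edge m Q Q' \<longleftrightarrow> Gamma_edge \<sigma> (pi_sigma \<sigma> Q) (pi_sigma \<sigma> Q')"
    if "quasi_array m Q \<and> quasi_array m Q'" for Q Q'
  proof
    assume "Delta_edge m Q Q'"
    then obtain k where "Dop m k Q = Some Q'" unfolding Delta_edge_def by blast
    then show "Gamma_edge \<sigma> (pi_sigma \<sigma> Q) (pi_sigma \<sigma> Q')" using edge_fwd that by blast
  next
    assume "Gamma_edge \<sigma> (pi_sigma \<sigma> Q) (pi_sigma \<sigma> Q')"
    then show "Delta_edge m Q Q'" using edge_bwd that by blast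
  qed
  show ?thesis
    using part1 bar_props bar_pi e by blast
qed

end
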